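(* For every integer $k\ge 0$, $$\int_0^{\pi/2} x^2\csc(x)\sin(2kx)\,dx = 3\zeta(2)\sum_{n=1}^k\frac{(-1)^{n+1}}{2n-1}-4\sum_{n=1}^k\frac{(-1)^{n+1}}{(2n-1)^3}.$$
   Context: $\zeta$ denotes the Riemann zeta function (so $\zeta(2)=\pi^2/6$). Empty sums (for $k=0$) equal $0$. *)

theory Defs
  imports "HOL-Analysis.Analysis"
begin

definition zeta :: "real \<Rightarrow> real" where
  "zeta s = (\<Sum>n. 1 / (real (Suc n)) powr s)"

end

theory Submission
  imports Defs
begin

lemma zeta2: "zeta 2 = pi^2/6"
proof -
  have "(\<lambda>n. 1 / (real (Suc n)) powr 2) = (\<lambda>n. 1 / (1 + real n)\<^sup>2)"
    by (rule ext) (simp add: powr_numeral)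
  moreover have "(\<lambda>n. 1 / (1 + real n)\<^sup>2) sums (pi^2/6)" using inverse_squares_sums by simp
  ultimately show ?thesis unfolding zeta_def by (simp add: sums_iff)
qed
lemma sin_odd: "sin ((2 * real k + 1) * (pi/2)) = (-1)^k"
proof -
  have e: "(2 * real k + 1) * (pi/2) = real k * pi + pi/2" by (simp add: field_simps)
  show ?thesis by (subst e) (simp add: sin_add sin_npi cos_npi)
qed
lemma cos_odd: "cos ((2 * real k + 1) * (pi/2)) = 0"
proof -
  have e: "(2 * real k + 1) * (pi/2) = real k * pi + pi/2" by (simp add: field_simps)
  show ?thesis by (subst e) (simp add: cos_add sin_npi cos_npi)
qed
lemma step_int:
  fixes m :: real assumes m: "m = 2 * real k + 1"
  shows "((\<lambda>x. 2 * (x\<^sup>2 * cos (m * x))) has_integral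
     (-1)^k * (pi^2 / (2*m) - 4 / m^3)) {0..pi/2}"
proof -
  have m0: "m \<noteq> 0" using m by simp
  define F where "F x = 2 * (x\<^sup>2 * sin (m*x) / m + 2 * x * cos (m*x) / m^2 - 2 * sin (m*x) / m^3)" for x
  have d: "(F has_vector_derivative 2 * (x\<^sup>2 * cos (m * x))) (at x within {0..pi/2})" for x
  proof -
    have "(F has_real_derivative 2 * (x\<^sup>2 * cos (m * x))) (at x)"
      unfolding F_def
      using m0 by (auto intro!: derivative_eq_intros simp: field_simps power2_eq_square power3_eq_cube)
    then show ?thesis
      by (simp add: has_real_derivative_iff_has_vector_derivative has_vector_derivative_at_within)
  qed
  have "((\<lambda>x. 2 * (x\<^sup>2 * cos (m * x))) has_integral F (pi/2) - F 0) {0..pi/2}"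
    by (rule fundamental_theorem_of_calculus) (use d in auto)
  moreover have "F (pi/2) - F 0 = (-1)^k * (pi^2 / (2*m) - 4 / m^3)"
  proof -
    have s: "sin (m * (pi/2)) = (-1)^k" and c: "cos (m*(pi/2)) = 0"
      using sin_odd[of k] cos_odd[of k] m by auto
    show ?thesis unfolding F_def s c using m0
      by (simp add: field_simps power2_eq_square)
  qed
  ultimately show ?thesis by simp
qed

theorem lemma2:
  fixes k :: nat
  shows "((\<lambda>x::real. x\<^sup>2 * (1 / sin x) * sin (2 * real k * x)) has_integral
           (3 * zeta 2 * (\<Sum>n=1..k. (-1) ^ (n + 1) / (2 * real n - 1))
            - 4 * (\<Sum>n=1..k. (-1) ^ (n + 1) / (2 * real n - 1) ^ 3))) {0..pi/2}"
proof (induction k)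
  case 0
  then show ?case by simp
next
  case (Suc k)
  define m where "m = 2 * real k + 1"
  have eq: "x\<^sup>2 * (1 / sin x) * sin (2 * real (Suc k) * x) =
      x\<^sup>2 * (1 / sin x) * sin (2 * real k * x) + 2 * (x\<^sup>2 * cos (m * x))"
    if x: "x \<in> {0..pi/2}" for x
  proof (cases "x = 0")
    case True then show ?thesis by simp
  next
    case False
    with x have "sin x > 0" by (intro sin_gt_zero) auto
    moreover have "sin (2 * real (Suc k) * x) = sin (2 * real k * x) + 2 * cos (m * x) * sin x"
    proof -
      have a: "2 * real (Suc k) * x = m * x + x" and b: "2 * real k * x = m * x - x"
        by (simp_all add: m_def algebra_simps)
      show ?thesis unfolding a b by (simp add: sin_add sin_diff)
    qed
    ultimately show ?thesis by (simp add: field_simps)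
  qed
  have i1: "((\<lambda>x. x\<^sup>2 * (1 / sin x) * sin (2 * real k * x) + 2 * (x\<^sup>2 * cos (m * x))) has_integral
     (3 * zeta 2 * (\<Sum>n=1..k. (-1) ^ (n + 1) / (2 * real n - 1))
            - 4 * (\<Sum>n=1..k. (-1) ^ (n + 1) / (2 * real n - 1) ^ 3))
      + (-1)^k * (pi^2 / (2*m) - 4 / m^3)) {0..pi/2}"
    by (rule has_integral_add[OF Suc.IH step_int[OF m_def]])
  have v: "(3 * zeta 2 * (\<Sum>n=1..k. (-1) ^ (n + 1) / (2 * real n - 1))
            - 4 * (\<Sum>n=1..k. (-1) ^ (n + 1) / (2 * real n - 1) ^ 3))
      + (-1)^k * (pi^2 / (2*m) - 4 / m^3) =
      (3 * zeta 2 * (\<Sum>n=1..Suc k. (-1) ^ (n + 1) / (2 * real n - 1))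
            - 4 * (\<Sum>n=1..Suc k. (-1) ^ (n + 1) / (2 * real n - 1) ^ 3))"
  proof -
    have mm: "2 * real (Suc k) - 1 = m" by (simp add: m_def)
    have m0: "m \<noteq> 0" by (simp add: m_def)
    have s1: "(\<Sum>n=1..Suc k. (-1) ^ (n + 1) / (2 * real n - 1)) =
       (\<Sum>n=1..k. (-1) ^ (n + 1) / (2 * real n - 1)) + (-1)^k / m"
      by (simp del: of_nat_Suc add: mm)
    have s2: "(\<Sum>n=1..Suc k. (-1) ^ (n + 1) / (2 * real n - 1) ^ 3) =
       (\<Sum>n=1..k. (-1) ^ (n + 1) / (2 * real n - 1) ^ 3) + (-1)^k / m ^ 3"
      by (simp del: of_nat_Suc add: mm)
    show ?thesis unfolding s1 s2 zeta2
      using m0 by (simp add: field_simps)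
  qed
  have i2: "((\<lambda>x. x\<^sup>2 * (1 / sin x) * sin (2 * real k * x) + 2 * (x\<^sup>2 * cos (m * x))) has_integral
      (3 * zeta 2 * (\<Sum>n=1..Suc k. (-1) ^ (n + 1) / (2 * real n - 1))
            - 4 * (\<Sum>n=1..Suc k. (-1) ^ (n + 1) / (2 * real n - 1) ^ 3))) {0..pi/2}"
    using i1 unfolding v .
  show ?case by (rule has_integral_cong[THEN iffD2, OF eq], assumption, rule i2)
qed

end
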